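(* Suppose that $\mathcal{H}$ is a flat group of automorphisms of a totally disconnected, locally compact group $G$. Then $\mathcal{H}=\mathcal{H}_{FC_d}$, i.e. every element of $\mathcal{H}$ has bounded conjugacy class $\varphi^{\mathcal{H}}$.
   Context: Automorphisms are continuous with continuous inverse. $\mathcal{B}(G)$ is the set of compact, open subgroups of $G$ with metric $d(V,W)=\log\bigl(|V:V\cap W|\cdot|W:W\cap V|\bigr)$. A set $B$ of automorphisms is bounded if $B.V=\{\beta(V):\beta\in B\}$ has bounded diameter for some (equivalently every) $V\in\mathcal{B}(G)$. $\varphi^{\mathcal{H}}=\{\psi\varphi\psi^{-1}:\psi\in\mathcal{H}\}$ and $\mathcal{H}_{FC_d}=\{\varphi\in\mathcal{H}:\varphi^{\mathcal{H}}\text{ bounded}\}$. The scale of $\varphi$ is $s_G(\varphi)=\min\{|\varphi(V):\varphi(V)\cap V|:V\in\mathcal{B}(G)\}$; $\mathcal{H}$ is flat if there is $O\in\mathcal{B}(G)$ with $|\varphi(O):\varphi(O)\cap O|=s_G(\varphi)$ for all $\varphi\in\mathcal{H}$. *)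

theory Defs
  imports "HOL-Analysis.Analysis" "HOL-Algebra.Bij" "HOL-Algebra.Coset"
begin

definition topological_group :: "('a, 'b) monoid_scheme \<Rightarrow> 'a topology \<Rightarrow> bool" where
  "topological_group G T \<longleftrightarrow> group G \<and> topspace T = carrier G \<and>
     continuous_map (prod_topology T T) T (\<lambda>(x, y). x \<otimes>\<^bsub>G\<^esub> y) \<and>
     continuous_map T T (\<lambda>x. inv\<^bsub>G\<^esub> x)"

definition tdlc_group :: "('a, 'b) monoid_scheme \<Rightarrow> 'a topology \<Rightarrow> bool" where
  "tdlc_group G T \<longleftrightarrow> topological_group G T \<and> locally_compact_space T \<and>
     (\<forall>x\<in>topspace T. connected_component_of_set T x = {x})"

definition top_auto :: "('a, 'b) monoid_scheme \<Rightarrow> 'a topology \<Rightarrow> ('a \<Rightarrow> 'a) set" where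
  "top_auto G T = {\<phi> \<in> auto G. homeomorphic_map T T \<phi>}"

definition cos :: "('a, 'b) monoid_scheme \<Rightarrow> 'a topology \<Rightarrow> 'a set set" where
  "cos G T = {V. subgroup V G \<and> compactin T V \<and> openin T V}"

definition rel_index :: "('a, 'b) monoid_scheme \<Rightarrow> 'a set \<Rightarrow> 'a set \<Rightarrow> nat" where
  "rel_index G V W = card (rcosets\<^bsub>G\<lparr>carrier := V\<rparr>\<^esub> (V \<inter> W))"

definition cos_dist :: "('a, 'b) monoid_scheme \<Rightarrow> 'a set \<Rightarrow> 'a set \<Rightarrow> real" where
  "cos_dist G V W = ln (real (rel_index G V W * rel_index G W V))"

definition bounded_auts :: "('a, 'b) monoid_scheme \<Rightarrow> 'a topology \<Rightarrow> ('a \<Rightarrow> 'a) set \<Rightarrow> bool" where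
  "bounded_auts G T B \<longleftrightarrow> (\<exists>V\<in>cos G T. \<exists>C::real.
     \<forall>X\<in>(\<lambda>\<beta>. \<beta> ` V) ` B. \<forall>Y\<in>(\<lambda>\<beta>. \<beta> ` V) ` B. cos_dist G X Y \<le> C)"

definition conj_class :: "('a, 'b) monoid_scheme \<Rightarrow> ('a \<Rightarrow> 'a) set \<Rightarrow> ('a \<Rightarrow> 'a) \<Rightarrow> ('a \<Rightarrow> 'a) set" where
  "conj_class G H \<phi> = {\<psi> \<otimes>\<^bsub>BijGroup (carrier G)\<^esub> \<phi> \<otimes>\<^bsub>BijGroup (carrier G)\<^esub>
       inv\<^bsub>BijGroup (carrier G)\<^esub> \<psi> | \<psi>. \<psi> \<in> H}"

definition FCd :: "('a, 'b) monoid_scheme \<Rightarrow> 'a topology \<Rightarrow> ('a \<Rightarrow> 'a) set \<Rightarrow> ('a \<Rightarrow> 'a) set" where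
  "FCd G T H = {\<phi> \<in> H. bounded_auts G T (conj_class G H \<phi>)}"

definition scale :: "('a, 'b) monoid_scheme \<Rightarrow> 'a topology \<Rightarrow> ('a \<Rightarrow> 'a) \<Rightarrow> nat" where
  "scale G T \<phi> = (LEAST n. \<exists>V\<in>cos G T. n = rel_index G (\<phi> ` V) V)"

definition flat :: "('a, 'b) monoid_scheme \<Rightarrow> 'a topology \<Rightarrow> ('a \<Rightarrow> 'a) set \<Rightarrow> bool" where
  "flat G T H \<longleftrightarrow> (\<exists>U\<in>cos G T. \<forall>\<phi>\<in>H. rel_index G (\<phi> ` U) U = scale G T \<phi>)"

end

theory Submission
  imports Defs
begin

lemma rel_index_alt: "rel_index G V W = card ((\<lambda>a. (V \<inter> W) #>\<^bsub>G\<^esub> a) ` V)"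
  unfolding rel_index_def RCOSETS_def by (auto intro!: arg_cong[where f=card])

lemma subgroup_inter2: "subgroup A G \<Longrightarrow> subgroup B G \<Longrightarrow> subgroup (A \<inter> B) G"
  by (rule subgroup.intro) (auto dest: subgroup.subset simp: subgroup.m_closed subgroup.one_closed subgroup.m_inv_closed)

lemma (in group) index_mult:
  assumes A: "subgroup A G" and B: "subgroup B G" and C: "subgroup C G"
    and f1: "finite ((\<lambda>a. (A \<inter> B) #> a) ` A)" and f2: "finite ((\<lambda>a. (B \<inter> C) #> a) ` B)"
  shows "card ((\<lambda>a. (A \<inter> C) #> a) ` A) \<le> card ((\<lambda>a. (A \<inter> B) #> a) ` A) * card ((\<lambda>a. (B \<inter> C) #> a) ` B)"
proof -
  let ?P = "((\<lambda>a. (A \<inter> B) #> a) ` A) \<times> ((\<lambda>a. (B \<inter> C) #> a) ` B)"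
  define F where "F = (\<lambda>(X, Y). (A \<inter> C) #> ((SOME k. k \<in> Y \<inter> A) \<otimes> (SOME r. r \<in> X)))"
  have AC: "subgroup (A \<inter> C) G" using A C by (rule subgroup_inter2)
  have sub: "(\<lambda>a. (A \<inter> C) #> a) ` A \<subseteq> F ` ?P"
  proof
    fix Z assume "Z \<in> (\<lambda>a. (A \<inter> C) #> a) ` A"
    then obtain a where a: "a \<in> A" "Z = (A \<inter> C) #> a" by blast
    have aG: "a \<in> carrier G" using a A subgroup.subset by blast
    define X where "X = (A \<inter> B) #> a"
    have "a \<in> X" unfolding X_def r_coset_def using A B aG
      by (auto intro!: bexI[of _ \<one>] simp: subgroup.one_closed)
    define r where "r = (SOME r. r \<in> X)"
    have "r \<in> X" unfolding r_def using \<open>a \<in> X\<close> by (rule someI)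
    then obtain h where h: "h \<in> A \<inter> B" "r = h \<otimes> a" unfolding X_def r_coset_def by blast
    have hG: "h \<in> carrier G" using h A subgroup.subset by blast
    define k0 where "k0 = inv h"
    have k0: "k0 \<in> A \<inter> B" using h A B unfolding k0_def by (auto simp: subgroup.m_inv_closed)
    have k0G: "k0 \<in> carrier G" using hG k0_def by simp
    define Y where "Y = (B \<inter> C) #> k0"
    have "k0 \<in> Y \<inter> A" unfolding Y_def r_coset_def using k0 B C k0G
      by (auto intro!: bexI[of _ \<one>] simp: subgroup.one_closed)
    define k where "k = (SOME k. k \<in> Y \<inter> A)"
    have "k \<in> Y \<inter> A" unfolding k_def using \<open>k0 \<in> Y \<inter> A\<close> by (rule someI)
    then obtain c where c: "c \<in> B \<inter> C" "k = c \<otimes> k0" "k \<in> A" unfolding Y_def r_coset_def by blast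
    have cG: "c \<in> carrier G" using c B subgroup.subset by blast
    have "c = k \<otimes> inv k0" using c cG k0G by (simp add: m_assoc)
    hence cA: "c \<in> A" using c k0 A by (metis IntD1 subgroup.m_closed subgroup.m_inv_closed)
    have "k \<otimes> r = c \<otimes> a" using c h hG cG aG k0_def by (simp add: m_assoc inv_solve_left')
    have "F (X, Y) = (A \<inter> C) #> (c \<otimes> a)"
      unfolding F_def using \<open>k \<otimes> r = c \<otimes> a\<close> by (simp add: k_def r_def)
    also have "\<dots> = ((A \<inter> C) #> c) #> a"
      using AC cG aG by (simp add: coset_mult_assoc subgroup.subset)
    also have "\<dots> = (A \<inter> C) #> a" using AC cG cA c by (subst coset_join2) auto
    finally have "Z = F (X, Y)" using a by simp
    moreover have "(X, Y) \<in> ?P" unfolding X_def Y_def using a k0 by auto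
    ultimately show "Z \<in> F ` ?P" by blast
  qed
  have "card ((\<lambda>a. (A \<inter> C) #> a) ` A) \<le> card (F ` ?P)"
    using sub f1 f2 by (intro card_mono) auto
  also have "\<dots> \<le> card ?P" using f1 f2 by (intro card_image_le) auto
  also have "\<dots> = card ((\<lambda>a. (A \<inter> B) #> a) ` A) * card ((\<lambda>a. (B \<inter> C) #> a) ` B)"
    by (rule card_cartesian_product)
  finally show ?thesis .
qed

lemma rel_index_image:
  assumes g: "group G" and h: "f \<in> hom G G" and inj: "inj_on f (carrier G)"
    and AG: "A \<subseteq> carrier G" and BG: "B \<subseteq> carrier G"
  shows "rel_index G (f ` A) (f ` B) = rel_index G A B"
proof -
  have int: "f ` A \<inter> f ` B = f ` (A \<inter> B)"
    using inj_on_image_Int[OF inj AG BG] by simp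
  have co: "(f ` K) #>\<^bsub>G\<^esub> (f a) = f ` (K #>\<^bsub>G\<^esub> a)" if "K \<subseteq> carrier G" "a \<in> carrier G" for K a
    using that h unfolding r_coset_def by (auto simp: hom_mult[symmetric] subset_iff)
  have "(\<lambda>a. (f ` A \<inter> f ` B) #>\<^bsub>G\<^esub> a) ` (f ` A) = image f ` ((\<lambda>a. (A \<inter> B) #>\<^bsub>G\<^esub> a) ` A)"
    unfolding int using co AG BG by (force simp: image_comp subset_iff)
  moreover have "inj_on (image f) ((\<lambda>a. (A \<inter> B) #>\<^bsub>G\<^esub> a) ` A)"
  proof (rule inj_on_subset[OF inj_on_image_Pow[OF inj]])
    show "(\<lambda>a. (A \<inter> B) #>\<^bsub>G\<^esub> a) ` A \<subseteq> Pow (carrier G)"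
      using AG unfolding r_coset_def by (auto simp: subset_iff intro: monoid.m_closed[OF group.is_monoid[OF g]])
  qed
  ultimately show ?thesis unfolding rel_index_alt by (simp add: card_image)
qed

lemma cont_rmult:
  assumes "topological_group G T" "b \<in> carrier G"
  shows "continuous_map T T (\<lambda>x. x \<otimes>\<^bsub>G\<^esub> b)"
proof -
  have c: "continuous_map (prod_topology T T) T (\<lambda>(x, y). x \<otimes>\<^bsub>G\<^esub> y)"
    using assms unfolding topological_group_def by blast
  have "continuous_map T (prod_topology T T) (\<lambda>x. (x, b))"
    using assms unfolding topological_group_def
    by (intro continuous_map_pairedI) (auto simp: continuous_map_const)
  from continuous_map_compose[OF this c] show ?thesis by (simp add: o_def)
qed

lemma (in group) finite_index:
  assumes tg: "topological_group G T" and V: "V \<in> cos G T" and W: "W \<in> cos G T"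
  shows "finite ((\<lambda>a. (V \<inter> W) #>\<^bsub>G\<^esub> a) ` V)"
proof -
  have top: "topspace T = carrier G" using tg unfolding topological_group_def by blast
  have sV: "subgroup V G" and sW: "subgroup W G" using V W unfolding cos_def by auto
  have K: "subgroup (V \<inter> W) G" using sV sW by (rule subgroup_inter2)
  have oK: "openin T (V \<inter> W)" using V W unfolding cos_def by auto
  have cV: "compactin T V" using V unfolding cos_def by auto
  let ?U = "(\<lambda>a. (V \<inter> W) #> a) ` V"
  have op: "openin T ((V \<inter> W) #> a)" if "a \<in> V" for a
  proof -
    have aG: "a \<in> carrier G" using that sV subgroup.subset by blast
    have "(V \<inter> W) #> a = {x \<in> topspace T. x \<otimes> inv a \<in> V \<inter> W}"
    proof safe
      fix x assume "x \<in> (V \<inter> W) #> a"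
      then obtain h where "h \<in> V \<inter> W" "x = h \<otimes> a" unfolding r_coset_def by blast
      moreover have "h \<in> carrier G" using \<open>h \<in> V \<inter> W\<close> K subgroup.subset by blast
      ultimately show "x \<in> topspace T" "x \<otimes> inv a \<in> V" "x \<otimes> inv a \<in> W"
        using aG top by (auto simp: m_assoc)
    next
      fix x assume "x \<in> topspace T" "x \<otimes> inv a \<in> V" "x \<otimes> inv a \<in> W"
      then show "x \<in> (V \<inter> W) #> a" unfolding r_coset_def using aG top
        by (auto intro!: bexI[of _ "x \<otimes> inv a"] simp: m_assoc)
    qed
    also have "openin T \<dots>"
      using openin_continuous_map_preimage[OF cont_rmult[OF tg inv_closed[OF aG]] oK] by simp
    finally show ?thesis .
  qed
  have cov: "V \<subseteq> \<Union> ?U"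
  proof
    fix a assume "a \<in> V"
    hence "a \<in> (V \<inter> W) #> a" using K sV subgroup.subset
      by (metis rcos_self subsetD)
    thus "a \<in> \<Union> ?U" using \<open>a \<in> V\<close> by blast
  qed
  obtain F where F: "finite F" "F \<subseteq> ?U" "V \<subseteq> \<Union> F"
    using cV op cov unfolding compactin_def by (metis (no_types, lifting) imageE)
  have "?U \<subseteq> F"
  proof
    fix X assume "X \<in> ?U"
    then obtain a where a: "a \<in> V" "X = (V \<inter> W) #> a" by blast
    have aG: "a \<in> carrier G" using a sV subgroup.subset by blast
    obtain Y where Y: "Y \<in> F" "a \<in> Y" using F a by blast
    then obtain b where b: "b \<in> V" "Y = (V \<inter> W) #> b" using F by blast
    have bG: "b \<in> carrier G" using b sV subgroup.subset by blast
    have "Y = (V \<inter> W) #> a" using repr_independence[OF _ bG K] Y b by simp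
    thus "X \<in> F" using Y a by simp
  qed
  thus ?thesis using F finite_subset by blast
qed

lemma cos_image:
  assumes tg: "topological_group G T" and f: "f \<in> top_auto G T" and V: "V \<in> cos G T"
  shows "f ` V \<in> cos G T"
proof -
  have g: "group G" using tg unfolding topological_group_def by blast
  have h: "f \<in> hom G G" and hm: "homeomorphic_map T T f" using f unfolding top_auto_def auto_def by auto
  have "subgroup (f ` V) G"
    using group_hom.subgroup_img_is_subgroup[of G G f V] g h V unfolding cos_def
    by (simp add: group_hom_def group_hom_axioms_def)
  moreover have "compactin T (f ` V)"
    using image_compactin[OF _ homeomorphic_imp_continuous_map[OF hm]] V unfolding cos_def by auto
  moreover have "openin T (f ` V)"
    using homeomorphic_map_openness[OF hm] V unfolding cos_def by (auto simp: openin_subset)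
  ultimately show ?thesis unfolding cos_def by simp
qed


lemma Bij_mult_image:
  assumes "f \<in> Bij S" "g \<in> Bij S" "X \<subseteq> S"
  shows "(f \<otimes>\<^bsub>BijGroup S\<^esub> g) ` X = f ` (g ` X)"
  using assms unfolding BijGroup_def by (force simp: compose_def)

lemma Bij_one_image:
  assumes "X \<subseteq> S"
  shows "\<one>\<^bsub>BijGroup S\<^esub> ` X = X"
  using assms unfolding BijGroup_def by auto

theorem proposition2:
  fixes G :: "('a, 'b) monoid_scheme" and T :: "'a topology" and H :: "('a \<Rightarrow> 'a) set"
  assumes "tdlc_group G T"
    and "subgroup H (BijGroup (carrier G))"
    and "H \<subseteq> top_auto G T"
    and "flat G T H"
  shows "H = FCd G T H"
proof -
  let ?B = "BijGroup (carrier G)"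
  have tg: "topological_group G T" using assms(1) unfolding tdlc_group_def by blast
  have g: "group G" using tg unfolding topological_group_def by blast
  interpret G: group G by (rule g)
  interpret B: group ?B by (rule group_BijGroup)
  interpret HS: subgroup H ?B by (rule assms(2))
  obtain U0 where U0: "U0 \<in> cos G T" and fl: "\<And>\<phi>. \<phi> \<in> H \<Longrightarrow> rel_index G (\<phi> ` U0) U0 = scale G T \<phi>"
    using assms(4) unfolding flat_def by blast
  have U0G: "U0 \<subseteq> carrier G" using U0 unfolding cos_def by (auto dest: subgroup.subset)
  have Hta: "\<phi> \<in> top_auto G T" if "\<phi> \<in> H" for \<phi> using that assms(3) by blast
  have Hhom: "\<phi> \<in> hom G G" if "\<phi> \<in> H" for \<phi> using Hta[OF that] unfolding top_auto_def auto_def by auto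
  have HBij: "\<phi> \<in> Bij (carrier G)" if "\<phi> \<in> H" for \<phi> using HS.subset that by (auto simp: BijGroup_def)
  have Hinj: "inj_on \<phi> (carrier G)" if "\<phi> \<in> H" for \<phi>
    using HBij[OF that] unfolding Bij_def bij_betw_def by auto
  have Himg: "\<phi> ` X \<subseteq> carrier G" if "\<phi> \<in> H" "X \<subseteq> carrier G" for \<phi> X
    using HBij[OF that(1)] that(2) unfolding Bij_def bij_betw_def by auto
  have Hcos: "\<phi> ` V \<in> cos G T" if "\<phi> \<in> H" "V \<in> cos G T" for \<phi> V
    using cos_image[OF tg Hta[OF that(1)] that(2)] .
  have key: "rel_index G ((\<psi> \<otimes>\<^bsub>?B\<^esub> \<phi> \<otimes>\<^bsub>?B\<^esub> inv\<^bsub>?B\<^esub> \<psi>) ` U0) U0 \<le> rel_index G (\<phi> ` U0) U0"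
    if "\<phi> \<in> H" "\<psi> \<in> H" for \<phi> \<psi>
  proof -
    define \<beta> where "\<beta> = \<psi> \<otimes>\<^bsub>?B\<^esub> \<phi> \<otimes>\<^bsub>?B\<^esub> inv\<^bsub>?B\<^esub> \<psi>"
    have \<beta>H: "\<beta> \<in> H" unfolding \<beta>_def using that by simp
    have \<psi>B: "\<psi> \<in> carrier ?B" and \<phi>B: "\<phi> \<in> carrier ?B" using that HS.subset by auto
    have "\<beta> \<otimes>\<^bsub>?B\<^esub> \<psi> = \<psi> \<otimes>\<^bsub>?B\<^esub> \<phi>" unfolding \<beta>_def
      using \<psi>B \<phi>B by (simp add: B.m_assoc)
    hence eq: "\<beta> ` (\<psi> ` U0) = \<psi> ` (\<phi> ` U0)"
      using Bij_mult_image[OF HBij[OF \<beta>H] HBij[OF that(2)] U0G]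
        Bij_mult_image[OF HBij[OF that(2)] HBij[OF that(1)] U0G] by simp
    have "rel_index G (\<beta> ` U0) U0 = scale G T \<beta>" using fl[OF \<beta>H] .
    also have "\<dots> \<le> rel_index G (\<beta> ` (\<psi> ` U0)) (\<psi> ` U0)"
      unfolding scale_def using Hcos[OF that(2) U0] by (intro Least_le) blast
    also have "\<dots> = rel_index G (\<phi> ` U0) U0"
      unfolding eq using rel_index_image[OF g Hhom[OF that(2)] Hinj[OF that(2)] Himg[OF that(1) U0G] U0G] .
    finally show ?thesis unfolding \<beta>_def .
  qed
  have fin: "finite ((\<lambda>a. (V \<inter> W) #>\<^bsub>G\<^esub> a) ` V)" if "V \<in> cos G T" "W \<in> cos G T" for V W
    using G.finite_index[OF tg that] .
  have sg: "subgroup V G" if "V \<in> cos G T" for V using that unfolding cos_def by auto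
  show ?thesis
  proof
    show "FCd G T H \<subseteq> H" unfolding FCd_def by auto
  next
    show "H \<subseteq> FCd G T H"
    proof
      fix \<phi> assume \<phi>H: "\<phi> \<in> H"
      define a where "a = rel_index G (\<phi> ` U0) U0"
      define b where "b = rel_index G ((inv\<^bsub>?B\<^esub> \<phi>) ` U0) U0"
      have b1: "rel_index G (\<beta> ` U0) U0 \<le> a" and b2: "rel_index G U0 (\<beta> ` U0) \<le> b"
        and bc: "\<beta> ` U0 \<in> cos G T"
        if "\<beta> \<in> conj_class G H \<phi>" for \<beta>
      proof -
        have ex: "\<exists>\<psi>. \<beta> = \<psi> \<otimes>\<^bsub>?B\<^esub> \<phi> \<otimes>\<^bsub>?B\<^esub> inv\<^bsub>?B\<^esub> \<psi> \<and> \<psi> \<in> H"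
          using that unfolding conj_class_def by (simp only: mem_Collect_eq)
        obtain \<psi> where \<psi>: "\<psi> \<in> H" "\<beta> = \<psi> \<otimes>\<^bsub>?B\<^esub> \<phi> \<otimes>\<^bsub>?B\<^esub> inv\<^bsub>?B\<^esub> \<psi>"
          using ex by blast
        have \<beta>H: "\<beta> \<in> H" using \<psi> \<phi>H by simp
        show "rel_index G (\<beta> ` U0) U0 \<le> a" unfolding a_def \<psi>(2) using key[OF \<phi>H \<psi>(1)] .
        show "\<beta> ` U0 \<in> cos G T" using Hcos[OF \<beta>H U0] .
        have \<psi>B: "\<psi> \<in> carrier ?B" and \<phi>B: "\<phi> \<in> carrier ?B" using \<psi> \<phi>H HS.subset by auto
        have ib: "inv\<^bsub>?B\<^esub> \<beta> = \<psi> \<otimes>\<^bsub>?B\<^esub> inv\<^bsub>?B\<^esub> \<phi> \<otimes>\<^bsub>?B\<^esub> inv\<^bsub>?B\<^esub> \<psi>"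
          unfolding \<psi>(2) using \<psi>B \<phi>B by (simp add: B.inv_mult_group B.m_assoc)
        have ibH: "inv\<^bsub>?B\<^esub> \<beta> \<in> H" using \<beta>H by simp
        have "(inv\<^bsub>?B\<^esub> \<beta>) ` (\<beta> ` U0) = (inv\<^bsub>?B\<^esub> \<beta> \<otimes>\<^bsub>?B\<^esub> \<beta>) ` U0"
          using Bij_mult_image[OF HBij[OF ibH] HBij[OF \<beta>H] U0G] by simp
        also have "\<dots> = U0" using \<beta>H HS.subset Bij_one_image[OF U0G] by (subst B.l_inv) auto
        finally have e: "(inv\<^bsub>?B\<^esub> \<beta>) ` (\<beta> ` U0) = U0" .
        have "rel_index G U0 (\<beta> ` U0) = rel_index G ((inv\<^bsub>?B\<^esub> \<beta>) ` U0) ((inv\<^bsub>?B\<^esub> \<beta>) ` (\<beta> ` U0))"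
          using rel_index_image[OF g Hhom[OF ibH] Hinj[OF ibH] U0G Himg[OF \<beta>H U0G]] by simp
        also have "\<dots> = rel_index G ((inv\<^bsub>?B\<^esub> \<beta>) ` U0) U0" using e by simp
        also have "\<dots> \<le> b" unfolding ib b_def using key[of "inv\<^bsub>?B\<^esub> \<phi>" \<psi>] \<phi>H \<psi>(1) by simp
        finally show "rel_index G U0 (\<beta> ` U0) \<le> b" .
      qed
      have tri: "rel_index G (\<beta> ` U0) (\<beta>' ` U0) \<le> a * b"
        if "\<beta> \<in> conj_class G H \<phi>" "\<beta>' \<in> conj_class G H \<phi>" for \<beta> \<beta>'
      proof -
        have "rel_index G (\<beta> ` U0) (\<beta>' ` U0) \<le> rel_index G (\<beta> ` U0) U0 * rel_index G U0 (\<beta>' ` U0)"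
          unfolding rel_index_alt
          by (rule G.index_mult[OF sg[OF bc[OF that(1)]] sg[OF U0] sg[OF bc[OF that(2)]]
                fin[OF bc[OF that(1)] U0] fin[OF U0 bc[OF that(2)]]])
        also have "\<dots> \<le> a * b" using b1[OF that(1)] b2[OF that(2)] by (rule mult_le_mono)
        finally show ?thesis .
      qed
      have "bounded_auts G T (conj_class G H \<phi>)"
        unfolding bounded_auts_def
      proof (intro bexI[OF _ U0] exI[of _ "max 0 (ln (real ((a * b) * (a * b))))"] ballI)
        fix X Y assume X: "X \<in> (\<lambda>\<beta>. \<beta> ` U0) ` conj_class G H \<phi>" and Y: "Y \<in> (\<lambda>\<beta>. \<beta> ` U0) ` conj_class G H \<phi>"
        have le: "rel_index G X Y * rel_index G Y X \<le> (a * b) * (a * b)"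
          using X Y tri by (auto intro!: mult_le_mono)
        show "cos_dist G X Y \<le> max 0 (ln (real ((a * b) * (a * b))))"
        proof (cases "rel_index G X Y * rel_index G Y X = 0")
          case True thus ?thesis unfolding cos_dist_def True by simp
        next
          case False
          hence "0 < real (rel_index G X Y * rel_index G Y X)" by simp
          moreover have "real (rel_index G X Y * rel_index G Y X) \<le> real ((a * b) * (a * b))"
            using le by (simp only: of_nat_le_iff)
          ultimately have "cos_dist G X Y \<le> ln (real ((a * b) * (a * b)))"
            unfolding cos_dist_def by (intro ln_mono) auto
          thus ?thesis by simp
        qed
      qed
      thus "\<phi> \<in> FCd G T H" unfolding FCd_def using \<phi>H by simp
    qed
  qed
qed

end
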